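(* Let $\mathcal{A}=\mathcal{A}_1\oplus\cdots\oplus\mathcal{A}_d$ with $d>1$ and each $\mathcal{A}_i$ a unital simple C*-algebra, and let $X$ be a Hilbert $\mathcal{A}$-bimodule, full and finite projective as a right $\mathcal{A}$-module. Then $\mathcal{A}$ is $X$-simple if and only if the associated matrix $A$ is irreducible.
   Context: A Hilbert $\mathcal{A}$-bimodule is a right Hilbert $\mathcal{A}$-module $X$ (inner product $(\cdot|\cdot)_{\mathcal{A}}$) with an injective $*$-homomorphism $\phi:\mathcal{A}\to\mathcal{L}_{\mathcal{A}}(X_{\mathcal{A}})$. Let $p_1,\dots,p_d$ be the minimal central projections of $\mathcal{A}$ and $r(p_j)\in\mathcal{L}_{\mathcal{A}}(X_{\mathcal A})$ the map $x\mapsto xp_j$. The associated matrix $A\in M_d(\{0,1\})$ has $A(i,j)=1$ if $\phi(p_i)r(p_j)\neq0$ and $0$ otherwise; $A$ is irreducible if for all $i,j$ there is $n\in\mathbb{N}$ with $A^n(i,j)>0$. A closed ideal $J\subseteq\mathcal{A}$ is $X$-invariant if $(x|\phi(a)y)_{\mathcal{A}}\in J$ for all $x,y\in X$, $a\in J$; $\mathcal{A}$ is $X$-simple if its only $X$-invariant closed ideals are $0$ and $\mathcal{A}$. *)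

theory Defs
  imports "HOL-Analysis.Analysis"
begin

text \<open>A unital C*-algebra is modelled on a type of class real_normed_algebra_1 + banach
(a unital real Banach algebra with norm 1 = 1), together with an explicit complex scalar
multiplication cs compatible with the real one and with the product, and an involution st
satisfying the C*-identity.\<close>

definition cstar_algebra :: "(complex \<Rightarrow> 'a::{real_normed_algebra_1,banach} \<Rightarrow> 'a) \<Rightarrow> ('a \<Rightarrow> 'a) \<Rightarrow> bool" where
  "cstar_algebra cs st \<longleftrightarrow>
     (\<forall>r a. cs (complex_of_real r) a = scaleR r a) \<and>
     (\<forall>c d a. cs (c * d) a = cs c (cs d a)) \<and>
     (\<forall>c d a. cs (c + d) a = cs c a + cs d a) \<and>
     (\<forall>c a b. cs c (a + b) = cs c a + cs c b) \<and>
     (\<forall>c a b. cs c (a * b) = cs c a * b) \<and>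
     (\<forall>c a b. cs c (a * b) = a * cs c b) \<and>
     (\<forall>c a. norm (cs c a) = cmod c * norm a) \<and>
     (\<forall>a. st (st a) = a) \<and>
     (\<forall>a b. st (a + b) = st a + st b) \<and>
     (\<forall>a b. st (a * b) = st b * st a) \<and>
     (\<forall>c a. st (cs c a) = cs (cnj c) (st a)) \<and>
     (\<forall>a. norm (st a * a) = norm a ^ 2)"

definition positive_elt :: "('a::{real_normed_algebra_1} \<Rightarrow> 'a) \<Rightarrow> 'a \<Rightarrow> bool" where
  "positive_elt st a \<longleftrightarrow> (\<exists>b. a = st b * b)"

definition closed_ideal_in :: "(complex \<Rightarrow> 'a::{real_normed_algebra_1} \<Rightarrow> 'a) \<Rightarrow> 'a set \<Rightarrow> 'a set \<Rightarrow> bool" where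
  "closed_ideal_in cs B J \<longleftrightarrow>
     J \<subseteq> B \<and> closed J \<and> 0 \<in> J \<and>
     (\<forall>x\<in>J. \<forall>y\<in>J. x + y \<in> J) \<and> (\<forall>x\<in>J. - x \<in> J) \<and>
     (\<forall>c. \<forall>x\<in>J. cs c x \<in> J) \<and>
     (\<forall>b\<in>B. \<forall>j\<in>J. b * j \<in> J \<and> j * b \<in> J)"

definition corner :: "'a::{real_normed_algebra_1} \<Rightarrow> 'a set" where
  "corner p = range (\<lambda>a. p * a)"

text \<open>A is the direct sum A_1 + ... + A_d of unital simple C*-algebras, with A_i = p_i A,
where p_0,...,p_(d-1) are nonzero pairwise orthogonal central projections summing to 1
and each summand p_i A is simple (its only closed ideals are 0 and itself).  Then the
p_i are exactly the minimal central projections of A.\<close>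
definition simple_sum_decomp :: "(complex \<Rightarrow> 'a::{real_normed_algebra_1,banach} \<Rightarrow> 'a) \<Rightarrow> ('a \<Rightarrow> 'a) \<Rightarrow> nat \<Rightarrow> (nat \<Rightarrow> 'a) \<Rightarrow> bool" where
  "simple_sum_decomp cs st d p \<longleftrightarrow>
     (\<forall>i<d. p i * p i = p i \<and> st (p i) = p i \<and> p i \<noteq> 0 \<and> (\<forall>a. p i * a = a * p i)) \<and>
     (\<forall>i<d. \<forall>j<d. i \<noteq> j \<longrightarrow> p i * p j = 0) \<and>
     (\<Sum>i<d. p i) = 1 \<and>
     (\<forall>i<d. \<forall>J. closed_ideal_in cs (corner (p i)) J \<longrightarrow> J = {0} \<or> J = corner (p i))"

text \<open>Right Hilbert A-module: complex vector space X (complex scaling xs) with right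
A-action rm and A-valued inner product ip (linear in the second variable), complete
for the norm sqrt(norm (ip x x)).\<close>
definition hilbert_module ::
  "(complex \<Rightarrow> 'a::{real_normed_algebra_1,banach} \<Rightarrow> 'a) \<Rightarrow> ('a \<Rightarrow> 'a) \<Rightarrow>
   (complex \<Rightarrow> 'x::ab_group_add \<Rightarrow> 'x) \<Rightarrow> ('x \<Rightarrow> 'a \<Rightarrow> 'x) \<Rightarrow> ('x \<Rightarrow> 'x \<Rightarrow> 'a) \<Rightarrow> bool" where
  "hilbert_module cs st xs rm ip \<longleftrightarrow>
     (\<forall>c d x. xs (c * d) x = xs c (xs d x)) \<and>
     (\<forall>c d x. xs (c + d) x = xs c x + xs d x) \<and>
     (\<forall>c x y. xs c (x + y) = xs c x + xs c y) \<and>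
     (\<forall>x. xs 1 x = x) \<and>
     (\<forall>x y a. rm (x + y) a = rm x a + rm y a) \<and>
     (\<forall>x a b. rm x (a + b) = rm x a + rm x b) \<and>
     (\<forall>x a b. rm x (a * b) = rm (rm x a) b) \<and>
     (\<forall>c x a. xs c (rm x a) = rm (xs c x) a) \<and>
     (\<forall>c x a. xs c (rm x a) = rm x (cs c a)) \<and>
     (\<forall>x y z. ip x (y + z) = ip x y + ip x z) \<and>
     (\<forall>c x y. ip x (xs c y) = cs c (ip x y)) \<and>
     (\<forall>x y a. ip x (rm y a) = ip x y * a) \<and>
     (\<forall>x y. st (ip x y) = ip y x) \<and>
     (\<forall>x. positive_elt st (ip x x)) \<and>
     (\<forall>x. ip x x = 0 \<longrightarrow> x = 0) \<and>
     (\<forall>f :: nat \<Rightarrow> 'x.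
        (\<forall>e>0. \<exists>N. \<forall>m\<ge>N. \<forall>n\<ge>N. sqrt (norm (ip (f m - f n) (f m - f n))) < e) \<longrightarrow>
        (\<exists>l. (\<lambda>n. sqrt (norm (ip (f n - l) (f n - l)))) \<longlonglongrightarrow> 0))"

definition adjointable :: "('x \<Rightarrow> 'x \<Rightarrow> 'a) \<Rightarrow> ('x \<Rightarrow> 'x) \<Rightarrow> bool" where
  "adjointable ip T \<longleftrightarrow> (\<exists>S. \<forall>x y. ip (T x) y = ip x (S y))"

definition hilbert_bimodule ::
  "(complex \<Rightarrow> 'a::{real_normed_algebra_1,banach} \<Rightarrow> 'a) \<Rightarrow> ('a \<Rightarrow> 'a) \<Rightarrow>
   (complex \<Rightarrow> 'x::ab_group_add \<Rightarrow> 'x) \<Rightarrow> ('x \<Rightarrow> 'a \<Rightarrow> 'x) \<Rightarrow> ('x \<Rightarrow> 'x \<Rightarrow> 'a) \<Rightarrow>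
   ('a \<Rightarrow> 'x \<Rightarrow> 'x) \<Rightarrow> bool" where
  "hilbert_bimodule cs st xs rm ip phi \<longleftrightarrow>
     hilbert_module cs st xs rm ip \<and>
     (\<forall>a. adjointable ip (phi a)) \<and>
     (\<forall>a b x. phi (a + b) x = phi a x + phi b x) \<and>
     (\<forall>c a x. phi (cs c a) x = xs c (phi a x)) \<and>
     (\<forall>a b x. phi (a * b) x = phi a (phi b x)) \<and>
     (\<forall>a x y. ip (phi a x) y = ip x (phi (st a) y)) \<and>
     inj phi"

definition full_module :: "(complex \<Rightarrow> 'a::{real_normed_algebra_1} \<Rightarrow> 'a) \<Rightarrow> ('x \<Rightarrow> 'x \<Rightarrow> 'a) \<Rightarrow> bool" where
  "full_module cs ip \<longleftrightarrow>
     closure {\<Sum>k<n. cs (c k) (ip (f k) (g k)) | (n::nat) c f g. True} = UNIV"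

text \<open>Finite projective: X is a finitely generated projective right A-module, i.e. a direct
summand of the free module A^n: there are right A-linear maps i : X \<rightarrow> A^n and
q : A^n \<rightarrow> X with q \<circ> i = id.  (A^n is represented by functions nat \<Rightarrow> 'a vanishing from n on.)\<close>
definition finite_projective :: "('x::ab_group_add \<Rightarrow> 'a::{real_normed_algebra_1} \<Rightarrow> 'x) \<Rightarrow> bool" where
  "finite_projective rm \<longleftrightarrow>
     (\<exists>(n::nat) (i :: 'x \<Rightarrow> nat \<Rightarrow> 'a) (q :: (nat \<Rightarrow> 'a) \<Rightarrow> 'x).
        (\<forall>x k. n \<le> k \<longrightarrow> i x k = 0) \<and>
        (\<forall>x y. i (x + y) = (\<lambda>k. i x k + i y k)) \<and>
        (\<forall>x a. i (rm x a) = (\<lambda>k. i x k * a)) \<and>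
        (\<forall>u v. q (\<lambda>k. u k + v k) = q u + q v) \<and>
        (\<forall>u a. q (\<lambda>k. u k * a) = rm (q u) a) \<and>
        (\<forall>x. q (i x) = x))"

definition X_invariant :: "('x \<Rightarrow> 'x \<Rightarrow> 'a) \<Rightarrow> ('a \<Rightarrow> 'x \<Rightarrow> 'x) \<Rightarrow> 'a set \<Rightarrow> bool" where
  "X_invariant ip phi J \<longleftrightarrow> (\<forall>x y a. a \<in> J \<longrightarrow> ip x (phi a y) \<in> J)"

definition X_simple :: "(complex \<Rightarrow> 'a::{real_normed_algebra_1} \<Rightarrow> 'a) \<Rightarrow> ('x \<Rightarrow> 'x \<Rightarrow> 'a) \<Rightarrow> ('a \<Rightarrow> 'x \<Rightarrow> 'x) \<Rightarrow> bool" where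
  "X_simple cs ip phi \<longleftrightarrow>
     (\<forall>J. closed_ideal_in cs UNIV J \<and> X_invariant ip phi J \<longrightarrow> J = {0} \<or> J = UNIV)"

text \<open>Indices 0..d-1 correspond to p_1..p_d.  A(i,j) = 1 iff phi(p_i) r(p_j) \<noteq> 0.\<close>
definition assoc_matrix :: "('x::zero \<Rightarrow> 'a \<Rightarrow> 'x) \<Rightarrow> ('a \<Rightarrow> 'x \<Rightarrow> 'x) \<Rightarrow> (nat \<Rightarrow> 'a) \<Rightarrow> nat \<Rightarrow> nat \<Rightarrow> nat" where
  "assoc_matrix rm phi p i j = (if (\<lambda>x. phi (p i) (rm x (p j))) \<noteq> (\<lambda>x. 0) then 1 else 0)"

fun mat_pow :: "nat \<Rightarrow> (nat \<Rightarrow> nat \<Rightarrow> nat) \<Rightarrow> nat \<Rightarrow> nat \<Rightarrow> nat \<Rightarrow> nat" where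
  "mat_pow d M 0 i j = (if i = j then 1 else 0)"
| "mat_pow d M (Suc n) i j = (\<Sum>k<d. mat_pow d M n i k * M k j)"

definition irreducible_matrix :: "nat \<Rightarrow> (nat \<Rightarrow> nat \<Rightarrow> nat) \<Rightarrow> bool" where
  "irreducible_matrix d M \<longleftrightarrow> (\<forall>i<d. \<forall>j<d. \<exists>n\<ge>1. mat_pow d M n i j > 0)"

end

theory Submission
  imports Defs
begin

lemma nat_sum_pos_ex:
  fixes f :: "nat \<Rightarrow> nat"
  assumes "(\<Sum>k<d. f k) > 0" shows "\<exists>k<d. f k > 0"
proof (rule ccontr)
  assume "\<not> (\<exists>k<d. f k > 0)"
  then have "\<forall>k\<in>{..<d}. f k = 0" by auto
  then have "(\<Sum>k<d. f k) = 0" by simp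
  with assms show False by simp
qed

lemma mat_pow_Suc_pos:
  "mat_pow d M (Suc n) i j > 0 \<longleftrightarrow> (\<exists>k<d. mat_pow d M n i k > 0 \<and> M k j > 0)"
proof
  assume "mat_pow d M (Suc n) i j > 0"
  then obtain k where "k<d" "mat_pow d M n i k * M k j > 0"
    using nat_sum_pos_ex[of "\<lambda>k. mat_pow d M n i k * M k j" d] by auto
  then show "\<exists>k<d. mat_pow d M n i k > 0 \<and> M k j > 0" by auto
next
  assume "\<exists>k<d. mat_pow d M n i k > 0 \<and> M k j > 0"
  then obtain k where k: "k<d" "mat_pow d M n i k > 0" "M k j > 0" by auto
  then have k2: "mat_pow d M n i k * M k j > 0" by simp
  have "mat_pow d M n i k * M k j \<le> (\<Sum>k<d. mat_pow d M n i k * M k j)"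
    by (rule member_le_sum) (use k in auto)
  with k2 have "0 < (\<Sum>k<d. mat_pow d M n i k * M k j)" by linarith
  then show "mat_pow d M (Suc n) i j > 0" by simp
qed

lemma mat_pow_closed:
  assumes cl: "\<And>l k. l \<in> S \<Longrightarrow> k < d \<Longrightarrow> M l k > 0 \<Longrightarrow> k \<in> S"
    and "i \<in> S"
  shows "j < d \<Longrightarrow> mat_pow d M n i j > 0 \<Longrightarrow> j \<in> S"
proof (induction n arbitrary: j)
  case 0 then show ?case using assms(2) by (simp split: if_splits)
next
  case (Suc n)
  then obtain k where "k<d" "mat_pow d M n i k > 0" "M k j > 0" using mat_pow_Suc_pos by metis
  then show ?case using Suc cl by blast
qed

theorem proposition5p5:
  fixes cs :: "complex \<Rightarrow> 'a::{real_normed_algebra_1,banach} \<Rightarrow> 'a"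
    and st :: "'a \<Rightarrow> 'a"
    and d :: nat and p :: "nat \<Rightarrow> 'a"
    and xs :: "complex \<Rightarrow> 'x::ab_group_add \<Rightarrow> 'x"
    and rm :: "'x \<Rightarrow> 'a \<Rightarrow> 'x" and ip :: "'x \<Rightarrow> 'x \<Rightarrow> 'a" and phi :: "'a \<Rightarrow> 'x \<Rightarrow> 'x"
  assumes "cstar_algebra cs st"
    and "d > 1"
    and "simple_sum_decomp cs st d p"
    and "hilbert_bimodule cs st xs rm ip phi"
    and "full_module cs ip"
    and "finite_projective rm"
  shows "X_simple cs ip phi \<longleftrightarrow> irreducible_matrix d (assoc_matrix rm phi p)"
proof -
  have cs_mr0: "\<forall>c a b. cs c (a * b) = a * cs c b"
    using assms(1) unfolding cstar_algebra_def by (elim conjE) assumption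
  note cs_mr = cs_mr0[rule_format]
  have cs_add0: "\<forall>c a b. cs c (a + b) = cs c a + cs c b"
    using assms(1) unfolding cstar_algebra_def by (elim conjE) assumption
  note cs_add = cs_add0[rule_format]
  have st_inv0: "\<forall>a. st (st a) = a"
    using assms(1) unfolding cstar_algebra_def by (elim conjE) assumption
  note st_inv = st_inv0[rule_format]
  have P10: "\<forall>i<d. p i * p i = p i \<and> st (p i) = p i \<and> p i \<noteq> 0 \<and> (\<forall>a. p i * a = a * p i)"
    using assms(3) unfolding simple_sum_decomp_def by (elim conjE) assumption
  note P1 = P10[rule_format]
  have portho0: "\<forall>i<d. \<forall>j<d. i \<noteq> j \<longrightarrow> p i * p j = 0"
    using assms(3) unfolding simple_sum_decomp_def by (elim conjE) assumption
  note portho = portho0[rule_format]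
  have psum0: "(\<Sum>i<d. p i) = 1"
    using assms(3) unfolding simple_sum_decomp_def by (elim conjE) assumption
  note psum = psum0[rule_format]
  have psimple0: "\<forall>i<d. \<forall>J. closed_ideal_in cs (corner (p i)) J \<longrightarrow> J = {0} \<or> J = corner (p i)"
    using assms(3) unfolding simple_sum_decomp_def by (elim conjE) assumption
  note psimple = psimple0[rule_format]
  have ip_add0: "\<forall>x y z. ip x (y + z) = ip x y + ip x z"
    using assms(4) unfolding hilbert_bimodule_def hilbert_module_def by (elim conjE) assumption
  note ip_add = ip_add0[rule_format]
  have ip_rm0: "\<forall>x y a. ip x (rm y a) = ip x y * a"
    using assms(4) unfolding hilbert_bimodule_def hilbert_module_def by (elim conjE) assumption
  note ip_rm = ip_rm0[rule_format]
  have ip_nd0: "\<forall>x. ip x x = 0 \<longrightarrow> x = 0"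
    using assms(4) unfolding hilbert_bimodule_def hilbert_module_def by (elim conjE) assumption
  note ip_nd = ip_nd0[rule_format]
  have phi_add0: "\<forall>a b x. phi (a + b) x = phi a x + phi b x"
    using assms(4) unfolding hilbert_bimodule_def hilbert_module_def by (elim conjE) assumption
  note phi_add = phi_add0[rule_format]
  have phi_mult0: "\<forall>a b x. phi (a * b) x = phi a (phi b x)"
    using assms(4) unfolding hilbert_bimodule_def hilbert_module_def by (elim conjE) assumption
  note phi_mult = phi_mult0[rule_format]
  have phi_adj0: "\<forall>a x y. ip (phi a x) y = ip x (phi (st a) y)"
    using assms(4) unfolding hilbert_bimodule_def hilbert_module_def by (elim conjE) assumption
  note phi_adj = phi_adj0[rule_format]
  have pidem: "p i * p i = p i" if "i < d" for i
    using P1[OF that] by (elim conjE) assumption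
  have pnz: "p i \<noteq> 0" if "i < d" for i
    using P1[OF that] by (elim conjE) assumption
  have pcent: "p i * a = a * p i" if "i < d" for i a
    using P1[OF that] by (elim conjE allE) assumption
  have phi0: "phi 0 x = 0" for x
    using phi_add[of 0 0 x] by simp
  have phia0: "phi a 0 = 0" for a
    using phi_mult[of a 0 0] phi0[of 0] by simp
  have ip0: "ip x 0 = 0" for x
    using ip_add[of x 0 0] by simp
  have cs0: "cs c 0 = 0" for c
    using cs_add[of c 0 0] by simp
  have phi_sum: "phi (\<Sum>l\<in>L. f l) x = (\<Sum>l\<in>L. phi (f l) x)" if "finite L" for L f x
    using that by (induction L rule: finite_induct) (auto simp: phi0 phi_add)
  have ip_swap: "ip x (phi a y) = ip (phi (st a) x) y" for x a y
    using phi_adj[of "st a" x y] by (simp add: st_inv)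
  have decomp: "a = (\<Sum>k<d. p k * a)" for a
    by (simp add: psum flip: sum_distrib_right)
  define M where "M = assoc_matrix rm phi p"
  have M_pos: "M l k > 0 \<longleftrightarrow> (\<exists>y. phi (p l) (rm y (p k)) \<noteq> 0)" for l k
    unfolding M_def assoc_matrix_def by (auto simp: fun_eq_iff)
  have closed_corner: "closed (corner (p k))" if "k < d" for k
  proof -
    have "corner (p k) = {a. p k * a = a}"
    proof (intro set_eqI iffI)
      fix a assume "a \<in> corner (p k)"
      then obtain b where "a = p k * b" unfolding corner_def by auto
      then show "a \<in> {a. p k * a = a}" using pidem[OF \<open>k < d\<close>] by (simp add: mult.assoc[symmetric])
    next
      fix a assume "a \<in> {a. p k * a = a}"
      then have "a = p k * a" by simp
      then show "a \<in> corner (p k)" unfolding corner_def by (rule range_eqI)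
    qed
    moreover have "closed {a. p k * a = a}"
      by (rule closed_Collect_eq) (auto intro!: continuous_intros)
    ultimately show ?thesis by simp
  qed
  have corner_lemma: "p k \<in> J"
    if J: "closed_ideal_in cs UNIV J" and k: "k < d" and w: "w \<in> J" "w \<noteq> 0" "p k * w = w" for J k w
  proof -
    define K where "K = J \<inter> corner (p k)"
    have Jp: "J \<subseteq> UNIV" "closed J" "0 \<in> J" "\<forall>x\<in>J. \<forall>y\<in>J. x + y \<in> J" "\<forall>x\<in>J. - x \<in> J"
      "\<forall>c. \<forall>x\<in>J. cs c x \<in> J" "\<forall>b. \<forall>j\<in>J. b * j \<in> J \<and> j * b \<in> J"
      using J unfolding closed_ideal_in_def by auto
    have "closed_ideal_in cs (corner (p k)) K"
      unfolding closed_ideal_in_def K_def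
    proof (intro conjI ballI allI)
      show "closed (J \<inter> corner (p k))" using Jp(2) closed_corner[OF k] by auto
      show "0 \<in> J \<inter> corner (p k)" using Jp(3) unfolding corner_def by (auto intro: range_eqI[of _ _ 0])
    next
      fix x y assume "x \<in> J \<inter> corner (p k)" "y \<in> J \<inter> corner (p k)"
      then show "x + y \<in> J \<inter> corner (p k)" using Jp(4) unfolding corner_def
        by (auto simp flip: distrib_left)
    next
      fix x assume "x \<in> J \<inter> corner (p k)"
      then show "- x \<in> J \<inter> corner (p k)" using Jp(5) unfolding corner_def
        by (auto intro: range_eqI[of _ _ "- _"])
    next
      fix c x assume "x \<in> J \<inter> corner (p k)"
      then show "cs c x \<in> J \<inter> corner (p k)" using Jp(6) unfolding corner_def
        by (auto simp: cs_mr)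
    next
      fix b j assume b: "b \<in> corner (p k)" and j: "j \<in> J \<inter> corner (p k)"
      then obtain u v where uv: "b = p k * u" "j = p k * v" unfolding corner_def by auto
      have "b * j \<in> J" "j * b \<in> J" using j Jp(7) by auto
      moreover have "b * j = p k * (u * j)" "j * b = p k * (v * b)" using uv by (simp_all add: mult.assoc)
      moreover have "p k * x \<in> corner (p k)" for x unfolding corner_def by (rule rangeI)
      ultimately show "b * j \<in> J \<inter> corner (p k)" "j * b \<in> J \<inter> corner (p k)"
        by simp_all
    qed auto
    then have "K = {0} \<or> K = corner (p k)" using psimple[OF k] by blast
    moreover have "w \<in> K" unfolding K_def corner_def using w by (auto intro: range_eqI[of _ _ w])
    ultimately have "K = corner (p k)" using w by auto
    moreover have "p k \<in> corner (p k)" unfolding corner_def by (auto intro: range_eqI[of _ _ 1])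
    ultimately show ?thesis unfolding K_def by auto
  qed
  define JS where "JS S = {a. \<forall>k<d. k \<notin> S \<longrightarrow> p k * a = 0}" for S
  have JS_ok: "closed_ideal_in cs UNIV (JS S) \<and> X_invariant ip phi (JS S) \<and> JS S \<noteq> {0} \<and> JS S \<noteq> UNIV"
    if S: "S \<subseteq> {..<d}" "i \<in> S" "k0 < d" "k0 \<notin> S"
      and cl: "\<And>l k. l\<in>S \<Longrightarrow> k<d \<Longrightarrow> M l k > 0 \<Longrightarrow> k \<in> S" for S i k0
  proof (intro conjI)
    show "closed_ideal_in cs UNIV (JS S)"
      unfolding closed_ideal_in_def
    proof (intro conjI ballI allI)
      have "JS S = (\<Inter>k\<in>{k. k < d \<and> k \<notin> S}. {a. p k * a = 0})"
        unfolding JS_def by auto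
      moreover have "closed {a. p k * a = 0}" for k
        by (rule closed_Collect_eq) (auto intro!: continuous_intros)
      ultimately show "closed (JS S)" by auto
    next
      fix x y assume "x \<in> JS S" "y \<in> JS S"
      then show "x + y \<in> JS S" unfolding JS_def by (auto simp: distrib_left)
    next
      fix x assume "x \<in> JS S"
      then show "- x \<in> JS S" unfolding JS_def by auto
    next
      fix c x assume "x \<in> JS S"
      then show "cs c x \<in> JS S" unfolding JS_def by (auto simp flip: cs_mr simp: cs0)
    next
      fix b j assume jJ: "j \<in> JS S"
      have "p k * (b * j) = 0 \<and> p k * (j * b) = 0" if k: "k < d" "k \<notin> S" for k
      proof
        have "p k * (b * j) = b * (p k * j)" by (metis mult.assoc pcent[OF k(1)])
        then show "p k * (b * j) = 0" using jJ k unfolding JS_def by simp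
        have "p k * (j * b) = (p k * j) * b" by (simp add: mult.assoc)
        then show "p k * (j * b) = 0" using jJ k unfolding JS_def by simp
      qed
      then show "b * j \<in> JS S" "j * b \<in> JS S" unfolding JS_def by auto
    qed (auto simp: JS_def)
    show "X_invariant ip phi (JS S)"
      unfolding X_invariant_def
    proof (intro allI impI)
      fix x y a assume a: "a \<in> JS S"
      show "ip x (phi a y) \<in> JS S"
        unfolding JS_def
      proof (intro allI impI CollectI)
        fix k assume k: "k < d" "k \<notin> S"
        have z: "phi (p l * a) (rm y (p k)) = 0" if "l < d" for l
        proof (cases "l \<in> S")
          case True
          then have "\<not> M l k > 0" using cl k by blast
          then have "phi (p l) (rm y (p k)) = 0" using M_pos[of l k] by auto
          then show ?thesis using pcent[OF that, of a] by (simp add: phi_mult phia0)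
        next
          case False
          then show ?thesis using a that unfolding JS_def by (simp add: phi0)
        qed
        have "phi a (rm y (p k)) = (\<Sum>l<d. phi (p l * a) (rm y (p k)))"
          by (subst decomp[of a]) (simp add: phi_sum)
        also have "\<dots> = 0" using z by simp
        finally have "phi a (rm y (p k)) = 0" .
        have "p k * ip x (phi a y) = ip (phi (st a) x) y * p k"
          by (simp add: ip_swap pcent[OF k(1)])
        also have "\<dots> = ip x (phi a (rm y (p k)))"
          by (simp add: ip_swap ip_rm)
        also have "\<dots> = 0" using \<open>phi a (rm y (p k)) = 0\<close> by (simp add: ip0)
        finally show "p k * ip x (phi a y) = 0" .
      qed
    qed
    have "p i \<in> JS S" unfolding JS_def using S portho by auto
    then show "JS S \<noteq> {0}" using pnz S by auto
    have "1 \<notin> JS S" unfolding JS_def using S pnz by auto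
    then show "JS S \<noteq> UNIV" by auto
  qed
  have "X_simple cs ip phi \<longleftrightarrow> irreducible_matrix d M"
  proof
    assume XS: "X_simple cs ip phi"
    show "irreducible_matrix d M"
      unfolding irreducible_matrix_def
    proof (rule ccontr)
      assume "\<not> (\<forall>i<d. \<forall>j<d. \<exists>n\<ge>1. 0 < mat_pow d M n i j)"
      then obtain i j where ij: "i < d" "j < d" "\<forall>n\<ge>1. mat_pow d M n i j = 0" by auto
      define R where "R = {k. k < d \<and> (\<exists>n\<ge>1. mat_pow d M n i k > 0)}"
      have Rcl: "k \<in> R" if "l \<in> R" "k < d" "M l k > 0" for l k
      proof -
        from that obtain n where n: "n \<ge> 1" "mat_pow d M n i l > 0" "l < d" unfolding R_def by auto
        then have "mat_pow d M (Suc n) i k > 0" using mat_pow_Suc_pos that by blast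
        then show ?thesis unfolding R_def using that by (intro CollectI conjI exI[of _ "Suc n"]) auto
      qed
      have jR: "j \<notin> R" unfolding R_def using ij by auto
      obtain S i' k0 where S: "S \<subseteq> {..<d}" "i' \<in> S" "k0 < d" "k0 \<notin> S"
        and cl: "\<And>l k. l\<in>S \<Longrightarrow> k<d \<Longrightarrow> M l k > 0 \<Longrightarrow> k \<in> S"
      proof (cases "R = {}")
        case False
        then obtain i' where "i' \<in> R" by auto
        then show ?thesis using that[of R i' j] Rcl jR ij unfolding R_def by blast
      next
        case True
        have "\<exists>k0<d. k0 \<noteq> i"
        proof (cases "i = 0")
          case True then show ?thesis using assms(2) by (intro exI[of _ 1]) auto
        next
          case False then show ?thesis using assms(2) by (intro exI[of _ 0]) auto
        qed
        then obtain k0 where k0: "k0 < d" "k0 \<noteq> i" by blast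
        have "k = i" if "l \<in> {i}" "k < d" "M l k > 0" for l k
        proof -
          have "mat_pow d M 0 i l > 0" using that by simp
          then have "mat_pow d M (Suc 0) i k > 0" using mat_pow_Suc_pos that ij by blast
          then have "k \<in> R" unfolding R_def using that by auto
          then show ?thesis using True by auto
        qed
        then show ?thesis using that[of "{i}" i k0] k0 ij by auto
      qed
      have "closed_ideal_in cs UNIV (JS S) \<and> X_invariant ip phi (JS S) \<and> JS S \<noteq> {0} \<and> JS S \<noteq> UNIV"
        using JS_ok[of S i' k0] S cl by presburger
      with XS show False unfolding X_simple_def by blast
    qed
  next
    assume irr: "irreducible_matrix d M"
    show "X_simple cs ip phi"
      unfolding X_simple_def
    proof (intro allI impI)
      fix J assume JJ: "closed_ideal_in cs UNIV J \<and> X_invariant ip phi J"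
      then have J: "closed_ideal_in cs UNIV J" and inv: "X_invariant ip phi J" by auto
      have Jp: "0 \<in> J" "\<forall>x\<in>J. \<forall>y\<in>J. x + y \<in> J" "\<forall>b. \<forall>j\<in>J. b * j \<in> J \<and> j * b \<in> J"
        using J unfolding closed_ideal_in_def by auto
      show "J = {0} \<or> J = UNIV"
      proof (cases "J = {0}")
        case True then show ?thesis by simp
      next
        case False
        then obtain a where a: "a \<in> J" "a \<noteq> 0" using Jp(1) by blast
        have "\<exists>k<d. p k * a \<noteq> 0"
        proof (rule ccontr)
          assume "\<not> ?thesis"
          then have "(\<Sum>k<d. p k * a) = 0" by simp
          with decomp[of a] have "a = 0" by (rule trans)
          then show False using a by simp
        qed
        then obtain i where i: "i < d" "p i * a \<noteq> 0" by auto
        have pa1: "p i * a \<in> J" using Jp(3) a by blast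
        have pa2: "p i * (p i * a) = p i * a" by (simp add: mult.assoc[symmetric] pidem[OF i(1)])
        have "p i \<in> J" by (rule corner_lemma[OF J i(1) pa1 i(2) pa2])
        define S where "S = {k. k < d \<and> p k \<in> J}"
        have cl: "k \<in> S" if lS: "l \<in> S" and kd: "k < d" and Mlk: "M l k > 0" for l k
        proof -
          obtain y where y: "phi (p l) (rm y (p k)) \<noteq> 0" using M_pos[of l k] Mlk by blast
          define z where "z = phi (p l) (rm y (p k))"
          have "ip z z \<noteq> 0"
          proof
            assume "ip z z = 0"
            then have "z = 0" by (rule ip_nd)
            with y show False unfolding z_def by simp
          qed
          have plJ: "p l \<in> J" using lS unfolding S_def by simp
          have "ip z (phi (p l) (rm y (p k))) \<in> J" using inv plJ unfolding X_invariant_def by blast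
          then have wJ: "ip z z \<in> J" by (simp only: z_def[symmetric])
          have "ip z z = ip z (phi (p l) (rm y (p k)))" by (simp only: z_def[symmetric])
          also have "\<dots> = ip (phi (st (p l)) z) (rm y (p k))" by (rule ip_swap)
          also have "\<dots> = ip (phi (st (p l)) z) y * p k" by (rule ip_rm)
          finally obtain c where c: "ip z z = c * p k" by blast
          have "p k * (c * p k) = (p k * c) * p k" by (simp only: mult.assoc)
          also have "\<dots> = (c * p k) * p k" by (simp only: pcent[OF kd])
          also have "\<dots> = c * (p k * p k)" by (simp only: mult.assoc)
          also have "\<dots> = c * p k" by (simp only: pidem[OF kd])
          finally have "p k * ip z z = ip z z" by (simp only: c)
          then have "p k \<in> J" using corner_lemma[OF J kd wJ \<open>ip z z \<noteq> 0\<close>] by simp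
          then show ?thesis unfolding S_def using kd by auto
        qed
        have iS: "i \<in> S" unfolding S_def using i(1) \<open>p i \<in> J\<close> by simp
        have allJ: "p j \<in> J" if jd: "j < d" for j
        proof -
          have "\<forall>i<d. \<forall>j<d. \<exists>n\<ge>1. mat_pow d M n i j > 0" using irr unfolding irreducible_matrix_def .
          then obtain n where n: "mat_pow d M n i j > 0" using i(1) jd by blast
          have "j \<in> S" by (rule mat_pow_closed[where S=S and M=M and i=i, OF _ iS jd n]) (rule cl)
          then show ?thesis unfolding S_def by simp
        qed
        have "(\<Sum>k\<in>K. p k) \<in> J" if "K \<subseteq> {..<d}" for K
        proof -
          have "finite K" using that finite_subset by blast
          then show ?thesis using that
          proof (induction K rule: finite_induct)
            case empty then show ?case using Jp(1) by simp
          next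
            case (insert x F)
            then have "p x \<in> J" "(\<Sum>k\<in>F. p k) \<in> J" using allJ by auto
            then show ?case using insert(1,2) Jp(2) by simp
          qed
        qed
        from this[of "{..<d}"] have "1 \<in> J" using psum by simp
        have "b \<in> J" for b using Jp(3) \<open>1 \<in> J\<close> by (metis mult.right_neutral)
        then show ?thesis by blast
      qed
    qed
  qed
  then show ?thesis unfolding M_def .
qed

end
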